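(* Let $n,m,V$ be positive integers, let $\lambda>0$ and $\beta_\lambda>0$. For each $v\in\{1,\dots,V\}$ let $\mathbf{Z}_v\in\Delta^n_m$ and let $\mathbf{T}_v\in\mathbb{R}^{m\times m}$ satisfy $\mathbf{T}_v^\top\mathbf{T}_v=\mathbf{I}_m$. Let $\mathbf{H}\in\mathbb{R}^{n\times m}$ be a fixed matrix with nonnegative entries. For $\boldsymbol{\alpha}=(\alpha_1,\dots,\alpha_V)^\top\in\mathbb{R}^V$ define $$h(\boldsymbol{\alpha})=\max_{\mathbf{P}\in\Delta^n_m}\ \lambda\sum_{v=1}^V\alpha_v^2\,\mathrm{Tr}\big(\mathbf{P}^\top\mathbf{Z}_v\mathbf{T}_v\big)-\beta_\lambda\|\mathbf{P}\|_F^2-\sum_{i=1}^n\sum_{j=1}^m H_{ij}P_{ij}.$$ Then $h$ is differentiable at every $\boldsymbol{\alpha}$ with $\boldsymbol{\alpha}^\top\in\Delta^1_V$, and for each $v$, $$\frac{\partial h(\boldsymbol{\alpha})}{\partial\alpha_v}=2\lambda\alpha_v\,\mathrm{Tr}\big(\mathbf{P}^{\star\top}\mathbf{Z}_v\mathbf{T}_v\big),$$ where $\mathbf{P}^\star$ is the (unique) maximizer of the inner maximization problem at $\boldsymbol{\alpha}$.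
   Context: For positive integers $a,b$, $\Delta^a_b=\{\zeta\in\mathbb{R}^{a\times b}:\zeta\mathbf{1}_b=\mathbf{1}_a,\ \zeta\ge 0\}$ denotes the set of $a\times b$ nonnegative matrices whose rows each sum to $1$; in particular $\boldsymbol{\alpha}^\top\in\Delta^1_V$ means $\boldsymbol{\alpha}$ lies in the probability simplex of $\mathbb{R}^V$. $\|\cdot\|_F$ is the Frobenius norm. In the paper's setting, $H_{ij}=\|\mathbf{F}_{i\cdot}/\sqrt{d_i}-\mathbf{Q}_{j\cdot}/\sqrt{d_{n+j}}\|_2^2$ for soft label matrices $\mathbf{F}\in\mathbb{R}^{n\times c}$, $\mathbf{Q}\in\mathbb{R}^{m\times c}$ and graph degrees $d_k$, and this matrix is held fixed in the inner problem. *)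

theory Defs
  imports "HOL-Analysis.Analysis"
begin

text \<open>Row-stochastic matrices: the set Delta^a_b (a rows, b columns).\<close>
definition row_stoch :: "(real^'b^'a) set" where
  "row_stoch = {P. (\<forall>i j. 0 \<le> P$i$j) \<and> (\<forall>i. (\<Sum>j\<in>UNIV. P$i$j) = 1)}"

definition frob_sq :: "real^'b^'a \<Rightarrow> real" where
  "frob_sq P = (\<Sum>i\<in>UNIV. \<Sum>j\<in>UNIV. (P$i$j)^2)"

definition inner_obj ::
  "real \<Rightarrow> real \<Rightarrow> ('v \<Rightarrow> real^'m^'n) \<Rightarrow> ('v \<Rightarrow> real^'m^'m) \<Rightarrow> real^'m^'n
     \<Rightarrow> real^'v::finite \<Rightarrow> real^'m::finite^'n::finite \<Rightarrow> real" where
  "inner_obj lam beta Z T H \<alpha> P =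
     lam * (\<Sum>v\<in>UNIV. (\<alpha>$v)^2 * trace (transpose P ** (Z v ** T v)))
     - beta * frob_sq P
     - (\<Sum>i\<in>UNIV. \<Sum>j\<in>UNIV. H$i$j * P$i$j)"

definition hfun ::
  "real \<Rightarrow> real \<Rightarrow> ('v \<Rightarrow> real^'m^'n) \<Rightarrow> ('v \<Rightarrow> real^'m^'m) \<Rightarrow> real^'m^'n
     \<Rightarrow> real^'v::finite \<Rightarrow> real" where
  "hfun lam beta Z T H \<alpha> =
     (SUP P\<in>(row_stoch :: (real^'m::finite^'n::finite) set). inner_obj lam beta Z T H \<alpha> P)"

end

theory Submission
  imports Defs
begin


lemma quad_opt:
  fixes L P Q :: "'a::real_inner"
  assumes cS: "convex S" and PS: "P \<in> S" and QS: "Q \<in> S"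
    and opt: "\<forall>X\<in>S. L \<bullet> X - b * (X \<bullet> X) \<le> L \<bullet> P - b * (P \<bullet> P)"
  shows "L \<bullet> Q - b * (Q \<bullet> Q) \<le> L \<bullet> P - b * (P \<bullet> P) - b * ((Q - P) \<bullet> (Q - P))"
proof -
  define D where "D = Q - P"
  define a where "a = L \<bullet> D - 2 * b * (P \<bullet> D)"
  define d where "d = D \<bullet> D"
  have d0: "d \<ge> 0" by (simp add: d_def)
  have exp: "L \<bullet> (P + t *\<^sub>R D) - b * ((P + t *\<^sub>R D) \<bullet> (P + t *\<^sub>R D))
      = L \<bullet> P - b * (P \<bullet> P) + t * a - b * t^2 * d" for t
    by (simp add: a_def d_def inner_add_left inner_add_right inner_commute algebra_simps power2_eq_square)
  have key: "t * a - b * t^2 * d \<le> 0" if "0 < t" "t \<le> 1" for t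
  proof -
    have "(1 - t) *\<^sub>R P + t *\<^sub>R Q \<in> S"
      using convexD[OF cS PS QS, of "1 - t" t] that by simp
    moreover have "(1 - t) *\<^sub>R P + t *\<^sub>R Q = P + t *\<^sub>R D" by (simp add: D_def algebra_simps)
    ultimately have "P + t *\<^sub>R D \<in> S" by simp
    with opt have "L \<bullet> (P + t *\<^sub>R D) - b * ((P + t *\<^sub>R D) \<bullet> (P + t *\<^sub>R D)) \<le> L \<bullet> P - b * (P \<bullet> P)"
      by blast
    then show ?thesis using exp[of t] by simp
  qed
  have a0: "a \<le> 0"
  proof (rule ccontr)
    assume "\<not> a \<le> 0"
    hence ap: "a > 0" by simp
    show False
    proof (cases "b * d \<le> 0")
      case True
      have "1 * a - b * 1^2 * d \<le> 0" using key[of 1] by simp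
      then show False using True ap by simp
    next
      case False
      define t where "t = min 1 (a / (2 * b * d))"
      have bd: "b * d > 0" using False by simp
      have t0: "0 < t" using ap bd unfolding t_def by (simp add: mult.assoc)
      have t1: "t \<le> 1" unfolding t_def by simp
      have "t * a - b * t^2 * d \<le> 0" using key[OF t0 t1] .
      hence "t * (a - t * (b * d)) \<le> 0" by (simp add: algebra_simps power2_eq_square)
      hence "a - t * (b * d) \<le> 0" using t0 by (simp add: mult_le_0_iff)
      moreover have "t * (b * d) \<le> a / 2"
      proof -
        have "t \<le> a / (2 * b * d)" unfolding t_def by simp
        hence "t * (b * d) \<le> a / (2 * b * d) * (b * d)" using mult_right_mono[of t "a/(2*b*d)" "b*d"] bd by linarith
        also have "\<dots> = a / 2" using bd by (auto simp add: field_simps)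
        finally show ?thesis .
      qed
      ultimately show False using ap by simp
    qed
  qed
  have "L \<bullet> Q - b * (Q \<bullet> Q) = L \<bullet> P - b * (P \<bullet> P) + a - b * d"
    using exp[of 1] by (simp add: D_def)
  then show ?thesis using a0 by (simp add: d_def D_def)
qed

lemma danskin:
  fixes L1 L2 P1 P2 :: "'a::real_inner"
  assumes cS: "convex S" and P1S: "P1 \<in> S" and P2S: "P2 \<in> S" and b: "b > 0"
    and opt1: "\<forall>X\<in>S. L1 \<bullet> X - b * (X \<bullet> X) \<le> L1 \<bullet> P1 - b * (P1 \<bullet> P1)"
    and opt2: "\<forall>X\<in>S. L2 \<bullet> X - b * (X \<bullet> X) \<le> L2 \<bullet> P2 - b * (P2 \<bullet> P2)"
  shows "0 \<le> (L2 \<bullet> P2 - b * (P2 \<bullet> P2)) - (L1 \<bullet> P1 - b * (P1 \<bullet> P1)) - (L2 - L1) \<bullet> P1"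
    and "(L2 \<bullet> P2 - b * (P2 \<bullet> P2)) - (L1 \<bullet> P1 - b * (P1 \<bullet> P1)) - (L2 - L1) \<bullet> P1
          \<le> (norm (L2 - L1))^2 / (2 * b)"
proof -
  have "L2 \<bullet> P1 - b * (P1 \<bullet> P1) \<le> L2 \<bullet> P2 - b * (P2 \<bullet> P2)" using opt2 P1S by blast
  then show "0 \<le> (L2 \<bullet> P2 - b * (P2 \<bullet> P2)) - (L1 \<bullet> P1 - b * (P1 \<bullet> P1)) - (L2 - L1) \<bullet> P1"
    by (simp add: inner_diff_left)
next
  define n where "n = norm (P2 - P1)"
  define c where "c = (L2 - L1) \<bullet> (P2 - P1)"
  have q1: "L1 \<bullet> P2 - b * (P2 \<bullet> P2) \<le> L1 \<bullet> P1 - b * (P1 \<bullet> P1) - b * ((P2 - P1) \<bullet> (P2 - P1))"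
    using quad_opt[OF cS P1S P2S opt1] .
  have q2: "L2 \<bullet> P1 - b * (P1 \<bullet> P1) \<le> L2 \<bullet> P2 - b * (P2 \<bullet> P2) - b * ((P1 - P2) \<bullet> (P1 - P2))"
    using quad_opt[OF cS P2S P1S opt2] .
  have nn: "(P2 - P1) \<bullet> (P2 - P1) = n^2" "(P1 - P2) \<bullet> (P1 - P2) = n^2"
    by (simp_all add: n_def power2_norm_eq_inner[symmetric] norm_minus_commute)
  have bn: "b * n^2 \<ge> 0" using b by simp
  have E: "(L2 \<bullet> P2 - b * (P2 \<bullet> P2)) - (L1 \<bullet> P1 - b * (P1 \<bullet> P1)) - (L2 - L1) \<bullet> P1 \<le> c"
    using q1[unfolded nn(1)] bn unfolding c_def by (simp add: inner_diff_left inner_diff_right)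
  have c1: "2 * b * n^2 \<le> c"
    using q1[unfolded nn(1)] q2[unfolded nn(2)] unfolding c_def by (simp add: inner_diff_left inner_diff_right)
  have c2: "c \<le> norm (L2 - L1) * n"
    unfolding c_def n_def using norm_cauchy_schwarz by blast
  have n0: "n \<ge> 0" by (simp add: n_def)
  have "c \<le> (norm (L2 - L1))^2 / (2 * b)"
  proof (cases "n = 0")
    case True
    moreover have "(norm (L2 - L1))^2 / (2 * b) \<ge> 0" using b by simp
    ultimately show ?thesis using c2 by simp
  next
    case False
    hence np: "n > 0" using n0 by simp
    have "2 * b * n * n \<le> norm (L2 - L1) * n" using c1 c2 by (simp add: power2_eq_square)
    hence "2 * b * n \<le> norm (L2 - L1)" using np by simp
    hence "n \<le> norm (L2 - L1) / (2 * b)" using b by (simp add: field_simps)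
    hence "norm (L2 - L1) * n \<le> norm (L2 - L1) * (norm (L2 - L1) / (2 * b))"
      by (rule mult_left_mono) simp
    also have "\<dots> = (norm (L2 - L1))^2 / (2 * b)" by (simp add: power2_eq_square)
    finally show ?thesis using c2 by simp
  qed
  with E show "(L2 \<bullet> P2 - b * (P2 \<bullet> P2)) - (L1 \<bullet> P1 - b * (P1 \<bullet> P1)) - (L2 - L1) \<bullet> P1
          \<le> (norm (L2 - L1))^2 / (2 * b)" by simp
qed




definition Lm :: "real \<Rightarrow> ('v \<Rightarrow> real^'m^'n) \<Rightarrow> ('v \<Rightarrow> real^'m^'m) \<Rightarrow> real^'m^'n
     \<Rightarrow> real^'v::finite \<Rightarrow> real^'m::finite^'n::finite" where
  "Lm lam Z T H \<alpha> = lam *\<^sub>R (\<Sum>v\<in>UNIV. (\<alpha>$v)^2 *\<^sub>R (Z v ** T v)) - H"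

lemma trace_inner:
  fixes P A :: "real^'m::finite^'n::finite"
  shows "trace (transpose P ** A) = P \<bullet> A"
  unfolding trace_def matrix_matrix_mult_def transpose_def inner_vec_def
  by (simp add: inner_real_def sum.swap[of _ "UNIV::'m set"])

lemma frob_inner: "frob_sq P = P \<bullet> P"
  unfolding frob_sq_def inner_vec_def by (simp add: inner_real_def power2_eq_square)

lemma obj_eq:
  "inner_obj lam beta Z T H \<alpha> P = Lm lam Z T H \<alpha> \<bullet> P - beta * (P \<bullet> P)"
proof -
  have h: "(\<Sum>i\<in>UNIV. \<Sum>j\<in>UNIV. H$i$j * P$i$j) = H \<bullet> P"
    unfolding inner_vec_def by (simp add: inner_real_def)
  have s: "(\<Sum>v\<in>UNIV. (\<alpha>$v)^2 * trace (transpose P ** (Z v ** T v)))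
      = (\<Sum>v\<in>UNIV. (\<alpha>$v)^2 *\<^sub>R (Z v ** T v)) \<bullet> P"
    by (simp add: trace_inner inner_sum_left inner_commute[of P])
  show ?thesis unfolding inner_obj_def Lm_def frob_inner h s
    by (simp add: inner_diff_left)
qed

lemma row_stoch_convex: "convex (row_stoch :: (real^'m::finite^'n::finite) set)"
  unfolding convex_def row_stoch_def
  by (auto simp: sum.distrib sum_distrib_left[symmetric])

lemma row_stoch_closed: "closed (row_stoch :: (real^'m::finite^'n::finite) set)"
proof -
  have "row_stoch = {P :: real^'m^'n. (\<forall>i. \<forall>j. 0 \<le> P$i$j) \<and> (\<forall>i. (\<Sum>j\<in>UNIV. P$i$j) = 1)}"
    unfolding row_stoch_def by simp
  also have "closed \<dots>"
    by (intro closed_Collect_conj closed_Collect_all closed_Collect_le closed_Collect_eq continuous_intros)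
  finally show ?thesis .
qed

lemma row_stoch_bounded: "bounded (row_stoch :: (real^'m::finite^'n::finite) set)"
proof -
  have "norm P \<le> real CARD('n)" if "P \<in> row_stoch" for P :: "real^'m^'n"
  proof -
    have "norm P \<le> (\<Sum>i\<in>UNIV. norm (P$i))" by (simp add: norm_vec_def L2_set_le_sum)
    also have "\<dots> \<le> (\<Sum>i\<in>UNIV. (\<Sum>j\<in>UNIV. \<bar>P$i$j\<bar>))"
      by (intro sum_mono norm_le_l1_cart)
    also have "\<dots> = (\<Sum>i\<in>(UNIV::'n set). (1::real))"
      using that unfolding row_stoch_def by simp
    finally show ?thesis by simp
  qed
  then show ?thesis unfolding bounded_iff by blast
qed

lemma row_stoch_nonempty: "(row_stoch :: (real^'m::finite^'n::finite) set) \<noteq> {}"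
proof -
  have "(\<chi> i j. 1 / real CARD('m)) \<in> (row_stoch :: (real^'m^'n) set)"
    unfolding row_stoch_def by simp
  then show ?thesis by blast
qed




lemma Lm_diff:
  "Lm lam Z T H y - Lm lam Z T H a = lam *\<^sub>R (\<Sum>v\<in>UNIV. ((y$v)^2 - (a$v)^2) *\<^sub>R (Z v ** T v))"
  unfolding Lm_def by (simp add: scaleR_diff_right[symmetric] sum_subtractf[symmetric] scaleR_diff_left)

lemma Lm_diff_norm:
  fixes y a :: "real^'v::finite" and Z :: "'v \<Rightarrow> real^'m::finite^'n::finite"
  assumes "lam \<ge> 0"
  shows "norm (Lm lam Z T H y - Lm lam Z T H a)
     \<le> norm (y - a) * (lam * (norm (y - a) + 2 * norm a) * (\<Sum>v\<in>UNIV. norm (Z v ** T v)))"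
proof -
  have c: "\<bar>(y$v)^2 - (a$v)^2\<bar> \<le> norm (y - a) * (norm (y - a) + 2 * norm a)" for v
  proof -
    have e: "(y$v)^2 - (a$v)^2 = (y - a)$v * ((y - a)$v + 2 * a$v)"
      by (simp add: algebra_simps power2_eq_square)
    have 1: "\<bar>(y - a)$v\<bar> \<le> norm (y - a)" by (rule component_le_norm_cart)
    have 2: "\<bar>a$v\<bar> \<le> norm a" by (rule component_le_norm_cart)
    have "\<bar>(y - a)$v + 2 * a$v\<bar> \<le> norm (y - a) + 2 * norm a" using 1 2 by linarith
    then have "\<bar>(y - a)$v\<bar> * \<bar>(y - a)$v + 2 * a$v\<bar> \<le> norm (y - a) * (norm (y - a) + 2 * norm a)"
      using 1 by (intro mult_mono) auto
    then show ?thesis unfolding e abs_mult .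
  qed
  have "norm (Lm lam Z T H y - Lm lam Z T H a)
      = lam * norm (\<Sum>v\<in>UNIV. ((y$v)^2 - (a$v)^2) *\<^sub>R (Z v ** T v))"
    using assms by (simp add: Lm_diff)
  also have "\<dots> \<le> lam * (\<Sum>v\<in>UNIV. \<bar>(y$v)^2 - (a$v)^2\<bar> * norm (Z v ** T v))"
    using assms by (intro mult_left_mono order.trans[OF norm_sum]) auto
  also have "\<dots> \<le> lam * (\<Sum>v\<in>UNIV. (norm (y - a) * (norm (y - a) + 2 * norm a)) * norm (Z v ** T v))"
    using assms c by (intro mult_left_mono sum_mono mult_right_mono) auto
  also have "\<dots> = norm (y - a) * (lam * (norm (y - a) + 2 * norm a) * (\<Sum>v\<in>UNIV. norm (Z v ** T v)))"
    by (simp only: sum_distrib_left[symmetric]) (simp add: algebra_simps)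
  finally show ?thesis .
qed




theorem theorem1:
  fixes lam beta :: real
    and Z :: "'v::finite \<Rightarrow> real^'m::finite^'n::finite"
    and T :: "'v \<Rightarrow> real^'m^'m"
    and H :: "real^'m^'n"
    and \<alpha> :: "real^'v"
  assumes "lam > 0" and "beta > 0"
    and "\<And>v. Z v \<in> row_stoch"
    and "\<And>v. transpose (T v) ** T v = mat 1"
    and "\<And>i j. 0 \<le> H$i$j"
    and "\<And>v. 0 \<le> \<alpha>$v" and "(\<Sum>v\<in>UNIV. \<alpha>$v) = 1"
  shows "(\<exists>!P. P \<in> row_stoch \<and>
              inner_obj lam beta Z T H \<alpha> P = hfun lam beta Z T H \<alpha>)
         \<and> hfun lam beta Z T H differentiable (at \<alpha>)
         \<and> (\<forall>Pstar. Pstar \<in> row_stoch \<and>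
                 inner_obj lam beta Z T H \<alpha> Pstar = hfun lam beta Z T H \<alpha> \<longrightarrow>
               (hfun lam beta Z T H has_derivative
                  (\<lambda>d. \<Sum>v\<in>UNIV. d$v *
                     (2 * lam * \<alpha>$v * trace (transpose Pstar ** (Z v ** T v))))) (at \<alpha>))"
proof -
  note lam = assms(1) and b = assms(2)
  define S where "S = (row_stoch :: (real^'m^'n) set)"
  define L where "L = Lm lam Z T H"
  define h where "h = hfun lam beta Z T H"
  define F where "F = (\<lambda>y (P::real^'m^'n). L y \<bullet> P - beta * (P \<bullet> P))"
  have Fobj: "inner_obj lam beta Z T H y P = F y P" for y P
    unfolding F_def L_def by (rule obj_eq)
  have cS: "convex S" unfolding S_def by (rule row_stoch_convex)
  have kS: "compact S" unfolding S_def
    using row_stoch_closed row_stoch_bounded by (simp add: compact_eq_bounded_closed)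
  have neS: "S \<noteq> {}" unfolding S_def by (rule row_stoch_nonempty)
  have "\<exists>P\<in>S. \<forall>Q\<in>S. F y Q \<le> F y P" for y
    using kS neS by (rule continuous_attains_sup) (unfold F_def, intro continuous_intros)
  then obtain Pm where PmS: "\<And>y. Pm y \<in> S" and Pmopt: "\<And>y. \<forall>Q\<in>S. F y Q \<le> F y (Pm y)"
    by metis
  have hF: "h y = F y (Pm y)" for y
  proof -
    have "h y = Sup ((\<lambda>P. F y P) ` S)"
      unfolding h_def hfun_def S_def Fobj ..
    also have "\<dots> = F y (Pm y)"
      by (rule cSup_eq_maximum) (use PmS Pmopt in auto)
    finally show ?thesis .
  qed
  have opt': "\<forall>X\<in>S. L y \<bullet> X - beta * (X \<bullet> X) \<le> L y \<bullet> Pm y - beta * (Pm y \<bullet> Pm y)" for y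
    using Pmopt[of y] unfolding F_def .
  have uniq: "Q = Pm \<alpha>" if "Q \<in> S" "F \<alpha> Q = h \<alpha>" for Q
  proof -
    have "F \<alpha> Q \<le> F \<alpha> (Pm \<alpha>) - beta * ((Q - Pm \<alpha>) \<bullet> (Q - Pm \<alpha>))"
      using quad_opt[OF cS PmS that(1) opt'] unfolding F_def .
    then have "beta * ((Q - Pm \<alpha>) \<bullet> (Q - Pm \<alpha>)) \<le> 0" using that(2) hF by simp
    then have "(Q - Pm \<alpha>) \<bullet> (Q - Pm \<alpha>) \<le> 0" using b by (simp add: mult_le_0_iff)
    then have "(Q - Pm \<alpha>) \<bullet> (Q - Pm \<alpha>) = 0" using inner_ge_zero[of "Q - Pm \<alpha>"] by linarith
    then show ?thesis by simp
  qed
  define P0 where "P0 = Pm \<alpha>"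
  define A where "A = (\<lambda>v. Z v ** T v)"
  define c where "c = (\<lambda>v. P0 \<bullet> A v)"
  define g where "g = (\<lambda>y. h \<alpha> + lam * (\<Sum>v\<in>UNIV. ((y$v)^2 - (\<alpha>$v)^2) * c v))"
  define e where "e = (\<lambda>y. h y - g y)"
  define K where "K = (\<lambda>y. lam * (norm (y - \<alpha>) + 2 * norm \<alpha>) * (\<Sum>v\<in>UNIV. norm (A v)))"
  have gL: "g y = h \<alpha> + (L y - L \<alpha>) \<bullet> P0" for y
    unfolding g_def L_def Lm_diff c_def A_def
    by (simp add: inner_sum_left inner_commute[of P0])
  have ebnd: "0 \<le> e y \<and> e y \<le> (norm (y - \<alpha>) * K y)^2 / (2 * beta)" for y
  proof -
    have d1: "0 \<le> h y - h \<alpha> - (L y - L \<alpha>) \<bullet> P0"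
      using danskin(1)[OF cS PmS PmS b opt'[of \<alpha>] opt'[of y]] unfolding hF F_def P0_def .
    have d2: "h y - h \<alpha> - (L y - L \<alpha>) \<bullet> P0 \<le> (norm (L y - L \<alpha>))^2 / (2 * beta)"
      using danskin(2)[OF cS PmS PmS b opt'[of \<alpha>] opt'[of y]] unfolding hF F_def P0_def .
    have "norm (L y - L \<alpha>) \<le> norm (y - \<alpha>) * K y"
      unfolding L_def K_def A_def by (rule Lm_diff_norm) (use lam in simp)
    then have "(norm (L y - L \<alpha>))^2 \<le> (norm (y - \<alpha>) * K y)^2"
      by (intro power_mono) auto
    then have "(norm (L y - L \<alpha>))^2 / (2 * beta) \<le> (norm (y - \<alpha>) * K y)^2 / (2 * beta)"
      using b by (intro divide_right_mono) auto
    then show ?thesis using d1 d2 unfolding e_def gL by simp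
  qed
  have e0: "e \<alpha> = 0" unfolding e_def g_def by simp
  have ederiv: "(e has_derivative (\<lambda>_. 0)) (at \<alpha>)"
    unfolding has_derivative_at_within
  proof (intro conjI)
    show "bounded_linear (\<lambda>_::real^'v. 0::real)" by (rule bounded_linear_zero)
    have lim1: "((\<lambda>y. norm (y - \<alpha>) * (K y ^ 2 / (2 * beta))) \<longlongrightarrow> 0 * (K \<alpha> ^ 2 / (2 * beta))) (at \<alpha>)"
    proof -
      have n0: "((\<lambda>y. norm (y - \<alpha>)) \<longlongrightarrow> 0) (at \<alpha>)"
        by (intro tendsto_norm_zero) (simp add: LIM_zero_iff tendsto_ident_at)
      have Kc: "isCont (\<lambda>y. K y ^ 2 / (2 * beta)) \<alpha>"
        unfolding K_def by (intro continuous_intros) (use b in simp)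
      then have "((\<lambda>y. K y ^ 2 / (2 * beta)) \<longlongrightarrow> K \<alpha> ^ 2 / (2 * beta)) (at \<alpha>)"
        by (simp add: isCont_def)
      from tendsto_mult[OF n0 this] show ?thesis .
    qed
    have bnd: "norm ((e y - e \<alpha> - 0) /\<^sub>R norm (y - \<alpha>)) \<le> norm (y - \<alpha>) * (K y ^ 2 / (2 * beta))" for y
    proof (cases "y = \<alpha>")
      case True then show ?thesis by simp
    next
      case False
      then have np: "norm (y - \<alpha>) > 0" by simp
      have "norm ((e y - e \<alpha> - 0) /\<^sub>R norm (y - \<alpha>)) = e y / norm (y - \<alpha>)"
      proof -
        have "norm ((e y - e \<alpha> - 0) /\<^sub>R norm (y - \<alpha>)) = \<bar>e y\<bar> / norm (y - \<alpha>)"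
          by (simp add: e0 divide_inverse mult.commute abs_mult)
        also have "\<bar>e y\<bar> = e y" using ebnd[of y] by simp
        finally show ?thesis .
      qed
      also have "\<dots> \<le> (norm (y - \<alpha>) * K y)^2 / (2 * beta) / norm (y - \<alpha>)"
        by (rule divide_right_mono) (use ebnd[of y] np in auto)
      also have "\<dots> = norm (y - \<alpha>) * (K y ^ 2 / (2 * beta))"
        using np by (simp add: power_mult_distrib power2_eq_square)
      finally show ?thesis .
    qed
    show "((\<lambda>y. (e y - e \<alpha> - 0) /\<^sub>R norm (y - \<alpha>)) \<longlongrightarrow> 0) (at \<alpha>)"
      by (rule Lim_null_comparison[OF always_eventually]) (use bnd lim1 in auto)
  qed
  have gderiv: "(g has_derivative (\<lambda>d. lam * (\<Sum>v\<in>UNIV. (2 * \<alpha>$v * d$v) * c v))) (at \<alpha>)"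
  proof -
    have dv: "((\<lambda>y. ((y$v)^2 - (\<alpha>$v)^2) * c v) has_derivative (\<lambda>d. (2 * \<alpha>$v * d$v) * c v)) (at \<alpha>)" for v
    proof -
      have d1: "((\<lambda>y::real^'v. y$v) has_derivative (\<lambda>d. d$v)) (at \<alpha>)"
        by (rule bounded_linear_imp_has_derivative) (rule bounded_linear_vec_nth)
      have d2: "((\<lambda>y. y$v * y$v) has_derivative (\<lambda>d. \<alpha>$v * d$v + d$v * \<alpha>$v)) (at \<alpha>)"
        using has_derivative_mult[OF d1 d1] .
      have d3: "((\<lambda>y. y$v * y$v - (\<alpha>$v)^2) has_derivative (\<lambda>d. \<alpha>$v * d$v + d$v * \<alpha>$v - 0)) (at \<alpha>)"
        by (rule has_derivative_diff[OF d2 has_derivative_const])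
      have d4: "((\<lambda>y. (y$v * y$v - (\<alpha>$v)^2) * c v) has_derivative (\<lambda>d. (\<alpha>$v * d$v + d$v * \<alpha>$v - 0) * c v)) (at \<alpha>)"
        by (rule has_derivative_mult_left[OF d3])
      have e1: "(\<lambda>y. (y$v * y$v - (\<alpha>$v)^2) * c v) = (\<lambda>y. ((y$v)^2 - (\<alpha>$v)^2) * c v)"
        by (simp add: power2_eq_square)
      have e2: "(\<lambda>d. (\<alpha>$v * d$v + d$v * \<alpha>$v - 0) * c v) = (\<lambda>d. (2 * \<alpha>$v * d$v) * c v)"
        by (rule ext) (simp add: algebra_simps)
      show ?thesis using d4 unfolding e1 e2 .
    qed
    have "((\<lambda>y. \<Sum>v\<in>UNIV. ((y$v)^2 - (\<alpha>$v)^2) * c v) has_derivative (\<lambda>d. \<Sum>v\<in>UNIV. (2 * \<alpha>$v * d$v) * c v)) (at \<alpha>)"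
      by (rule has_derivative_sum) (rule dv)
    then have "((\<lambda>y. lam * (\<Sum>v\<in>UNIV. ((y$v)^2 - (\<alpha>$v)^2) * c v)) has_derivative (\<lambda>d. lam * (\<Sum>v\<in>UNIV. (2 * \<alpha>$v * d$v) * c v))) (at \<alpha>)"
      by (rule has_derivative_mult_right)
    then have "((\<lambda>y. lam * (\<Sum>v\<in>UNIV. ((y$v)^2 - (\<alpha>$v)^2) * c v) + h \<alpha>) has_derivative (\<lambda>d. lam * (\<Sum>v\<in>UNIV. (2 * \<alpha>$v * d$v) * c v))) (at \<alpha>)"
      by (rule has_derivative_add_const)
    moreover have "(\<lambda>y. lam * (\<Sum>v\<in>UNIV. ((y$v)^2 - (\<alpha>$v)^2) * c v) + h \<alpha>) = g"
      unfolding g_def by (rule ext) simp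
    ultimately show ?thesis by (simp only:)
  qed
  have hderiv: "(h has_derivative (\<lambda>d. \<Sum>v\<in>UNIV. d$v * (2 * lam * \<alpha>$v * c v))) (at \<alpha>)"
  proof -
    have "((\<lambda>y. g y + e y) has_derivative (\<lambda>d. lam * (\<Sum>v\<in>UNIV. (2 * \<alpha>$v * d$v) * c v) + 0)) (at \<alpha>)"
      by (rule has_derivative_add[OF gderiv ederiv])
    moreover have "(\<lambda>y. g y + e y) = h" unfolding e_def by auto
    moreover have "(\<lambda>d. lam * (\<Sum>v\<in>UNIV. (2 * \<alpha>$v * d$v) * c v) + 0) = (\<lambda>d. \<Sum>v\<in>UNIV. d$v * (2 * lam * \<alpha>$v * c v))"
      by (rule ext) (simp add: sum_distrib_left mult.assoc mult.left_commute)
    ultimately show ?thesis by (simp only:)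
  qed
  have part1: "\<exists>!P. P \<in> row_stoch \<and> inner_obj lam beta Z T H \<alpha> P = hfun lam beta Z T H \<alpha>"
  proof (rule ex1I[of _ P0])
    show "P0 \<in> row_stoch \<and> inner_obj lam beta Z T H \<alpha> P0 = hfun lam beta Z T H \<alpha>"
      using PmS[of \<alpha>] hF[of \<alpha>] unfolding P0_def S_def h_def Fobj by simp
    show "\<And>P. P \<in> row_stoch \<and> inner_obj lam beta Z T H \<alpha> P = hfun lam beta Z T H \<alpha> \<Longrightarrow> P = P0"
      using uniq unfolding P0_def S_def h_def Fobj by blast
  qed
  have part3: "(hfun lam beta Z T H has_derivative
                  (\<lambda>d. \<Sum>v\<in>UNIV. d$v *
                     (2 * lam * \<alpha>$v * trace (transpose Pstar ** (Z v ** T v))))) (at \<alpha>)"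
    if "Pstar \<in> row_stoch \<and> inner_obj lam beta Z T H \<alpha> Pstar = hfun lam beta Z T H \<alpha>" for Pstar
  proof -
    have "Pstar = P0" using uniq that unfolding P0_def S_def h_def Fobj by blast
    then have "trace (transpose Pstar ** (Z v ** T v)) = c v" for v
      unfolding c_def A_def by (simp add: trace_inner)
    then show ?thesis using hderiv unfolding h_def by simp
  qed
  show ?thesis
  proof -
    have "h differentiable (at \<alpha>)" using hderiv by (rule differentiableI)
    then show ?thesis using part1 part3 unfolding h_def by blast
  qed
qed


end
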